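(* Let $k\ge 0$. For every $k$-essential term $\alpha$ there exists a $k$-correct term $\alpha'$ equivalent to $\alpha$.
   Context: Let $\Sigma$ be a finite alphabet, $1\notin\Sigma$ a separator, $\Sigma_1=\Sigma\cup\{1\}$, $\mathrm{rk}(w)=|w|_1$ for $w\in\Sigma_1^*$; for $\mathrm{rk}(u)\ge j$, $u\odot_j v$ replaces the $j$-th occurrence of $1$ in $u$ by $v$; these operations extend elementwise to sets of words. Let $N$ be a set of nonterminals, each with a rank in $\mathbb{N}$. Terms (with ranks) are built from nonterminals (their rank), words of $\Sigma^*$ (rank $0$) and $1$ (rank $1$) by $(\alpha\cdot\beta)$ of rank $\mathrm{rk}\alpha+\mathrm{rk}\beta$ and $(\alpha\odot_j\beta)$, $j\ge1$, allowed when $\mathrm{rk}\alpha\ge j$, of rank $\mathrm{rk}\alpha+\mathrm{rk}\beta-1$. A term is $k$-correct if all its subterms have rank at most $k$; it is $k$-essential if its rank and the ranks of all nonterminals occurring in it are less than $k$. A ground multicontext is such an expression built additionally from ranked variables $x_1,\dots,x_t$ as leaves but without nonterminals; two ground multicontexts are equivalent if for every valuation $\mu$ assigning to each variable of rank $r$ a set of words of rank $r$, their values (with $\cdot$ as concatenation and $\odot_j$ as intercalation, elementwise) coincide. Two terms $\alpha_1,\alpha_2$ are equivalent if $\alpha_1=D_1[A_1,\dots,A_s]$ and $\alpha_2=D_2[A_1,\dots,A_s]$ for some nonterminals $A_1,\dots,A_s$ and equivalent ground multicontexts $D_1,D_2$ in variables $x_1,\dots,x_s$. *)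

theory Defs
  imports Main
begin

text \<open>Words over Sigma_1 = Sigma plus separator 1: we use 'a option lists, None = separator 1.\<close>

definition wrk :: "'a option list \<Rightarrow> nat" where
  "wrk w = length (filter (\<lambda>c. c = None) w)"

fun intercal :: "nat \<Rightarrow> 'a option list \<Rightarrow> 'a option list \<Rightarrow> 'a option list" where
  "intercal j [] v = []"
| "intercal j (Some a # u) v = Some a # intercal j u v"
| "intercal j (None # u) v = (if j = 1 then v @ u else None # intercal (j - 1) u v)"

definition set_concat :: "'a option list set \<Rightarrow> 'a option list set \<Rightarrow> 'a option list set" where
  "set_concat U V = {u @ v | u v. u \<in> U \<and> v \<in> V}"

definition set_intercal :: "nat \<Rightarrow> 'a option list set \<Rightarrow> 'a option list set \<Rightarrow> 'a option list set" where
  "set_intercal j U V = {intercal j u v | u v. u \<in> U \<and> v \<in> V}"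

text \<open>Expressions with leaves of type 'v: nonterminals (terms) or variables (ground multicontexts).
  Ins j a b stands for (a odot_j b).\<close>
datatype ('a, 'v) expr = Leaf 'v | Word "'a list" | One
  | Cat "('a, 'v) expr" "('a, 'v) expr" | Ins nat "('a, 'v) expr" "('a, 'v) expr"

fun rank :: "('v \<Rightarrow> nat) \<Rightarrow> ('a, 'v) expr \<Rightarrow> nat" where
  "rank \<rho> (Leaf x) = \<rho> x"
| "rank \<rho> (Word w) = 0"
| "rank \<rho> One = 1"
| "rank \<rho> (Cat a b) = rank \<rho> a + rank \<rho> b"
| "rank \<rho> (Ins j a b) = rank \<rho> a + rank \<rho> b - 1"

fun wf_expr :: "('v \<Rightarrow> nat) \<Rightarrow> ('a, 'v) expr \<Rightarrow> bool" where
  "wf_expr \<rho> (Leaf x) = True"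
| "wf_expr \<rho> (Word w) = True"
| "wf_expr \<rho> One = True"
| "wf_expr \<rho> (Cat a b) = (wf_expr \<rho> a \<and> wf_expr \<rho> b)"
| "wf_expr \<rho> (Ins j a b) = (1 \<le> j \<and> j \<le> rank \<rho> a \<and> wf_expr \<rho> a \<and> wf_expr \<rho> b)"

fun subexprs :: "('a, 'v) expr \<Rightarrow> ('a, 'v) expr set" where
  "subexprs (Cat a b) = insert (Cat a b) (subexprs a \<union> subexprs b)"
| "subexprs (Ins j a b) = insert (Ins j a b) (subexprs a \<union> subexprs b)"
| "subexprs e = {e}"

fun leaves :: "('a, 'v) expr \<Rightarrow> 'v set" where
  "leaves (Leaf x) = {x}"
| "leaves (Word w) = {}"
| "leaves One = {}"
| "leaves (Cat a b) = leaves a \<union> leaves b"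
| "leaves (Ins j a b) = leaves a \<union> leaves b"

definition k_correct :: "nat \<Rightarrow> ('v \<Rightarrow> nat) \<Rightarrow> ('a, 'v) expr \<Rightarrow> bool" where
  "k_correct k \<rho> t \<longleftrightarrow> (\<forall>s \<in> subexprs t. rank \<rho> s \<le> k)"

definition k_essential :: "nat \<Rightarrow> ('v \<Rightarrow> nat) \<Rightarrow> ('a, 'v) expr \<Rightarrow> bool" where
  "k_essential k \<rho> t \<longleftrightarrow> rank \<rho> t < k \<and> (\<forall>A \<in> leaves t. \<rho> A < k)"

fun val :: "('v \<Rightarrow> 'a option list set) \<Rightarrow> ('a, 'v) expr \<Rightarrow> 'a option list set" where
  "val \<mu> (Leaf x) = \<mu> x"
| "val \<mu> (Word w) = {map Some w}"
| "val \<mu> One = {[None]}"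
| "val \<mu> (Cat a b) = set_concat (val \<mu> a) (val \<mu> b)"
| "val \<mu> (Ins j a b) = set_intercal j (val \<mu> a) (val \<mu> b)"

definition mc_equiv :: "(nat \<Rightarrow> nat) \<Rightarrow> ('a, nat) expr \<Rightarrow> ('a, nat) expr \<Rightarrow> bool" where
  "mc_equiv \<rho>V D1 D2 \<longleftrightarrow>
     (\<forall>\<mu>. (\<forall>x. \<forall>w \<in> \<mu> x. wrk w = \<rho>V x) \<longrightarrow> val \<mu> D1 = val \<mu> D2)"

text \<open>Substituting nonterminals for variables: D[A_1,...,A_s] (variable i is x_(i+1)).\<close>
fun subst :: "(nat \<Rightarrow> 'n) \<Rightarrow> ('a, nat) expr \<Rightarrow> ('a, 'n) expr" where
  "subst \<sigma> (Leaf i) = Leaf (\<sigma> i)"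
| "subst \<sigma> (Word w) = Word w"
| "subst \<sigma> One = One"
| "subst \<sigma> (Cat a b) = Cat (subst \<sigma> a) (subst \<sigma> b)"
| "subst \<sigma> (Ins j a b) = Ins j (subst \<sigma> a) (subst \<sigma> b)"

definition term_equiv :: "('n \<Rightarrow> nat) \<Rightarrow> ('a, 'n) expr \<Rightarrow> ('a, 'n) expr \<Rightarrow> bool" where
  "term_equiv \<rho> \<alpha>1 \<alpha>2 \<longleftrightarrow>
     (\<exists>As :: 'n list. \<exists>D1 D2 :: ('a, nat) expr.
        leaves D1 \<subseteq> {..<length As} \<and> leaves D2 \<subseteq> {..<length As} \<and>
        wf_expr (\<lambda>i. \<rho> (As ! i)) D1 \<and> wf_expr (\<lambda>i. \<rho> (As ! i)) D2 \<and>
        mc_equiv (\<lambda>i. \<rho> (As ! i)) D1 D2 \<and>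
        subst (\<lambda>i. As ! i) D1 = \<alpha>1 \<and> subst (\<lambda>i. As ! i) D2 = \<alpha>2)"

end

theory Submission
  imports Defs "HOL-Library.Multiset"
begin

datatype ('a,'v) nf = NW "'a list" | NH | NCat "('a,'v) nf" "('a,'v) nf" | NNode 'v "('a,'v) nf list"

fun fillO :: "'a option list \<Rightarrow> 'a option list option list \<Rightarrow> 'a option list" where
  "fillO [] os = []"
| "fillO (Some a # w) os = Some a # fillO w os"
| "fillO (None # w) [] = None # fillO w []"
| "fillO (None # w) (oo # os) = (case oo of None \<Rightarrow> [None] | Some s \<Rightarrow> s) @ fillO w os"

fun holes :: "('a,'v) nf \<Rightarrow> nat" where
  "holes (NW w) = 0" | "holes NH = 1" | "holes (NCat a b) = holes a + holes b"
| "holes (NNode x cs) = sum_list (map holes cs)"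

fun sem :: "('v \<Rightarrow> 'a option list) \<Rightarrow> ('a,'v) nf \<Rightarrow> 'a option list" where
  "sem g (NW w) = map Some w" | "sem g NH = [None]" | "sem g (NCat a b) = sem g a @ sem g b"
| "sem g (NNode x cs) = fillO (g x) (map (\<lambda>c. Some (sem g c)) cs)"

fun good :: "('v \<Rightarrow> nat) \<Rightarrow> ('a,'v) nf \<Rightarrow> bool" where
  "good \<rho> (NW w) = True" | "good \<rho> NH = True" | "good \<rho> (NCat a b) = (good \<rho> a \<and> good \<rho> b)"
| "good \<rho> (NNode x cs) = (length cs = \<rho> x \<and> (\<forall>c\<in>set cs. good \<rho> c))"

fun leafN :: "('a,'v) nf \<Rightarrow> 'v multiset" where
  "leafN (NW w) = {#}" | "leafN NH = {#}" | "leafN (NCat a b) = leafN a + leafN b"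
| "leafN (NNode x cs) = add_mset x (sum_list (map leafN cs))"

fun plug :: "nat \<Rightarrow> ('a,'v) nf \<Rightarrow> ('a,'v) nf \<Rightarrow> ('a,'v) nf"
and plugL :: "nat \<Rightarrow> ('a,'v) nf list \<Rightarrow> ('a,'v) nf \<Rightarrow> ('a,'v) nf list" where
  "plug j (NW w) t = NW w"
| "plug j NH t = t"
| "plug j (NCat a b) t = (if j \<le> holes a then NCat (plug j a t) b else NCat a (plug (j - holes a) b t))"
| "plug j (NNode x cs) t = NNode x (plugL j cs t)"
| "plugL j [] t = []"
| "plugL j (c # cs) t = (if j \<le> holes c then plug j c t # cs else c # plugL (j - holes c) cs t)"

fun plugW :: "nat \<Rightarrow> 'a option list list \<Rightarrow> 'a option list \<Rightarrow> 'a option list list" where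
  "plugW j [] v = []"
| "plugW j (s # ss) v = (if j \<le> wrk s then intercal j s v # ss else s # plugW (j - wrk s) ss v)"

fun tr :: "('v \<Rightarrow> nat) \<Rightarrow> ('a,'v) expr \<Rightarrow> ('a,'v) nf" where
  "tr \<rho> (Leaf x) = NNode x (replicate (\<rho> x) NH)"
| "tr \<rho> (Word w) = NW w" | "tr \<rho> One = NH"
| "tr \<rho> (Cat a b) = NCat (tr \<rho> a) (tr \<rho> b)"
| "tr \<rho> (Ins j a b) = plug j (tr \<rho> a) (tr \<rho> b)"

definition pos :: "nat \<Rightarrow> nat list \<Rightarrow> nat" where
  "pos i D = Suc (length (filter (\<lambda>j. j \<notin> set D) [0..<i]))"

fun chain :: "('a,'v) expr \<Rightarrow> ('a,'v) expr list \<Rightarrow> nat list \<Rightarrow> nat list \<Rightarrow> ('a,'v) expr" where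
  "chain cur es D [] = cur"
| "chain cur es D (i # is) = chain (Ins (pos i D) cur (es ! i)) es (i # D) is"

definition ordr :: "nat list \<Rightarrow> nat list" where
  "ordr hs = filter (\<lambda>i. hs ! i = 0) [0..<length hs] @ rev (filter (\<lambda>i. hs ! i \<noteq> 0) [0..<length hs])"

fun build :: "('a,'v) nf \<Rightarrow> ('a,'v) expr" where
  "build (NW w) = Word w" | "build NH = One" | "build (NCat a b) = Cat (build a) (build b)"
| "build (NNode x cs) = chain (Leaf x) (map build cs) [] (ordr (map holes cs))"

fun weval :: "('v \<Rightarrow> 'a option list) \<Rightarrow> ('a,'v) expr \<Rightarrow> 'a option list" where
  "weval g (Leaf x) = g x" | "weval g (Word w) = map Some w" | "weval g One = [None]"
| "weval g (Cat a b) = weval g a @ weval g b"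
| "weval g (Ins j a b) = intercal j (weval g a) (weval g b)"

fun leafl :: "('a,'v) expr \<Rightarrow> 'v list" where
  "leafl (Leaf x) = [x]" | "leafl (Word w) = []" | "leafl One = []"
| "leafl (Cat a b) = leafl a @ leafl b" | "leafl (Ins j a b) = leafl a @ leafl b"

fun num :: "nat \<Rightarrow> ('a,'v) expr \<Rightarrow> ('a,nat) expr" where
  "num n (Leaf x) = Leaf n" | "num n (Word w) = Word w" | "num n One = One"
| "num n (Cat a b) = Cat (num n a) (num (n + length (leafl a)) b)"
| "num n (Ins j a b) = Ins j (num n a) (num (n + length (leafl a)) b)"


lemma wrk_simps[simp]: "wrk [] = 0" "wrk (Some a # u) = wrk u" "wrk (None # u) = Suc (wrk u)"
  "wrk (u @ v) = wrk u + wrk v" "wrk (map Some w) = 0"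
  by (auto simp: wrk_def filter_empty_conv)

lemma intercal_append:
  "1 \<le> j \<Longrightarrow> intercal j (u @ v) w = (if j \<le> wrk u then intercal j u w @ v else u @ intercal (j - wrk u) v w)"
proof (induction u arbitrary: j)
  case Nil then show ?case by simp
next
  case (Cons c u)
  show ?case
  proof (cases c)
    case None
    show ?thesis
    proof (cases "j = 1")
      case True then show ?thesis using None by simp
    next
      case False
      then have "1 \<le> j - 1" using Cons.prems by simp
      then show ?thesis using None False Cons.IH[of "j-1"] by auto
    qed
  qed (use Cons in auto)
qed

lemma intercal_Nil_wrk0: "wrk u = 0 \<Longrightarrow> intercal j u v = u"
  by (induction j u v rule: intercal.induct) auto

lemma fillO_none: "fillO w (replicate n None) = w"
proof (induction w arbitrary: n)
  case (Cons c w) then show ?case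
    by (cases c) (auto simp del: replicate.simps, cases n, auto simp: Cons.IH[of 0, simplified])
qed simp

lemma fillO_hole: "fillO w (replicate n (Some [None])) = w"
proof (induction w arbitrary: n)
  case (Cons c w) then show ?case
    by (cases c) (auto simp del: replicate.simps, cases n, auto simp: Cons.IH[of 0, simplified])
qed simp

lemma fillO_wrk: "length ss = wrk w \<Longrightarrow> wrk (fillO w (map Some ss)) = sum_list (map wrk ss)"
proof (induction w arbitrary: ss)
  case (Cons c w) then show ?case by (cases c) (auto, cases ss, auto)
qed simp

lemma fillO_plug: "length ss = wrk w \<Longrightarrow> 1 \<le> j \<Longrightarrow>
  intercal j (fillO w (map Some ss)) v = fillO w (map Some (plugW j ss v))"
proof (induction w arbitrary: ss j)
  case (Cons c w)
  show ?case
  proof (cases c)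
    case None
    then obtain s ss' where ss: "ss = s # ss'" using Cons.prems by (cases ss) auto
    show ?thesis using Cons.prems Cons.IH[of ss' "j - wrk s"] by (auto simp: None ss intercal_append)
  qed (use Cons in auto)
qed simp

lemma fillO_step: "length os = wrk w \<Longrightarrow> i < length os \<Longrightarrow> os ! i = None \<Longrightarrow>
  (\<forall>s. Some s \<in> set (take i os) \<longrightarrow> wrk s = 0) \<Longrightarrow>
  intercal (Suc (length (filter (\<lambda>x. x = None) (take i os)))) (fillO w os) t = fillO w (os[i := Some t])"
proof (induction w arbitrary: os i)
  case (Cons c w)
  show ?case
  proof (cases c)
    case None
    then obtain oo os' where os: "os = oo # os'" using Cons.prems by (cases os) auto
    show ?thesis
    proof (cases i)
      case 0 then show ?thesis using Cons.prems by (simp add: None os)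
    next
      case (Suc i')
      have len: "length os' = wrk w" "i' < length os'" "os' ! i' = None"
        "\<forall>s. Some s \<in> set (take i' os') \<longrightarrow> wrk s = 0"
        using Cons.prems by (auto simp: os Suc None)
      note IH = Cons.IH[OF len]
      show ?thesis
      proof (cases oo)
        case None
        then show ?thesis using IH by (simp add: \<open>c = None\<close> os Suc)
      next
        case (Some s)
        have "wrk s = 0" using Cons.prems by (auto simp: os Suc Some)
        then show ?thesis using IH by (simp add: \<open>c = None\<close> os Suc Some intercal_append)
      qed
    qed
  next
    case (Some a)
    then show ?thesis using Cons.prems Cons.IH[of os i] by simp
  qed
qed simp

lemma plug_good:
  "good \<rho> n \<Longrightarrow> good \<rho> t \<Longrightarrow> good \<rho> (plug j n t)"
  "(\<forall>c\<in>set cs. good \<rho> c) \<Longrightarrow> good \<rho> t \<Longrightarrow> (\<forall>c\<in>set (plugL j cs t). good \<rho> c) \<and> length (plugL j cs t) = length cs"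
  by (induction j n t and j cs t rule: plug_plugL.induct) auto

lemma plug_holes:
  "1 \<le> j \<Longrightarrow> j \<le> holes n \<Longrightarrow> holes (plug j n t) = holes n + holes t - 1"
  "1 \<le> j \<Longrightarrow> j \<le> sum_list (map holes cs) \<Longrightarrow> sum_list (map holes (plugL j cs t)) = sum_list (map holes cs) + holes t - 1"
  by (induction j n t and j cs t rule: plug_plugL.induct) auto

lemma plug_leafN:
  "1 \<le> j \<Longrightarrow> j \<le> holes n \<Longrightarrow> leafN (plug j n t) = leafN n + leafN t"
  "1 \<le> j \<Longrightarrow> j \<le> sum_list (map holes cs) \<Longrightarrow> sum_list (map leafN (plugL j cs t)) = sum_list (map leafN cs) + leafN t"
  by (induction j n t and j cs t rule: plug_plugL.induct) auto

lemma sem_Node: "sem g (NNode x cs) = fillO (g x) (map Some (map (sem g) cs))"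
  by (simp add: comp_def)

lemma wrk_sem: assumes "\<forall>x. wrk (g x) = \<rho> x" shows "good \<rho> n \<Longrightarrow> wrk (sem g n) = holes n"
proof (induction n)
  case (NNode x cs)
  have "map wrk (map (sem g) cs) = map holes cs" using NNode by auto
  moreover have "wrk (fillO (g x) (map Some (map (sem g) cs))) = sum_list (map wrk (map (sem g) cs))"
    by (rule fillO_wrk) (use NNode.prems assms in simp)
  ultimately show ?case by (simp only: sem_Node holes.simps)
qed auto

lemma sem_plug: assumes g: "\<forall>x. wrk (g x) = \<rho> x" shows
  "good \<rho> n \<Longrightarrow> 1 \<le> j \<Longrightarrow> j \<le> holes n \<Longrightarrow> sem g (plug j n t) = intercal j (sem g n) (sem g t)"
  "(\<forall>c\<in>set cs. good \<rho> c) \<Longrightarrow> 1 \<le> j \<Longrightarrow> map (sem g) (plugL j cs t) = plugW j (map (sem g) cs) (sem g t)"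
proof (induction j n t and j cs t rule: plug_plugL.induct)
  case (3 j a b t)
  then show ?case using wrk_sem[OF g, of a] by (auto simp: intercal_append)
next
  case (4 j x cs t)
  have "length (map (sem g) cs) = wrk (g x)" using 4 g by simp
  then show ?case using 4 by (simp only: sem_Node plug.simps fillO_plug) simp
next
  case (6 j c cs t)
  then show ?case using wrk_sem[OF g, of c] by auto
qed auto

lemma sum_list_rep0: "sum_list (replicate n (0::'b::monoid_add)) = 0"
  by (induction n) auto

lemma tr_props:
  "wf_expr \<rho> e \<Longrightarrow> good \<rho> (tr \<rho> e) \<and> holes (tr \<rho> e) = rank \<rho> e \<and> leafN (tr \<rho> e) = mset (leafl e)"
proof (induction e)
  case (Ins j a b)
  then show ?case by (auto simp: plug_good plug_holes plug_leafN)
qed (auto simp: sum_list_replicate sum_list_rep0)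

lemma tr_sem: assumes g: "\<forall>x. wrk (g x) = \<rho> x"
  shows "wf_expr \<rho> e \<Longrightarrow> weval g e = sem g (tr \<rho> e)"
proof (induction e)
  case (Leaf x) then show ?case by (simp add: fillO_hole)
next
  case (Ins j a b)
  then show ?case using tr_props[of \<rho> a] sem_plug(1)[OF g, of "tr \<rho> a" j "tr \<rho> b"] by auto
qed auto

definition osf :: "'x list \<Rightarrow> nat list \<Rightarrow> 'x option list" where
  "osf ss D = map (\<lambda>j. if j \<in> set D then Some (ss ! j) else None) [0..<length ss]"

lemma osf_update: "i < length ss \<Longrightarrow> (osf ss D)[i := Some (ss ! i)] = osf ss (i # D)"
  by (rule nth_equalityI) (auto simp: osf_def nth_list_update)

lemma osf_take: "i \<le> length ss \<Longrightarrow> take i (osf ss D) = map (\<lambda>j. if j \<in> set D then Some (ss ! j) else None) [0..<i]"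
  by (simp add: osf_def take_map)

lemma pos_osf: "i \<le> length ss \<Longrightarrow> pos i D = Suc (length (filter (\<lambda>x. x = None) (take i (osf ss D))))"
  by (simp add: osf_take pos_def filter_map comp_def)

lemma chain_sem:
  assumes es: "length es = length ss" "\<forall>j<length ss. weval g (es ! j) = ss ! j" and w: "length ss = wrk w"
  shows "weval g cur = fillO w (osf ss D) \<Longrightarrow> set is \<subseteq> {..<length ss} \<Longrightarrow> distinct is \<Longrightarrow>
    set is \<inter> set D = {} \<Longrightarrow>
    (\<forall>n<length is. \<forall>j. (j \<in> set D \<or> j \<in> set (take n is)) \<longrightarrow> j < is ! n \<longrightarrow> wrk (ss ! j) = 0) \<Longrightarrow>
    weval g (chain cur es D is) = fillO w (osf ss (rev is @ D))"
proof (induction "is" arbitrary: cur D)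
  case Nil then show ?case by simp
next
  case (Cons i "is")
  have il: "i < length ss" and iD: "i \<notin> set D" using Cons.prems by auto
  have c0: "\<forall>j. j \<in> set D \<longrightarrow> j < i \<longrightarrow> wrk (ss ! j) = 0"
    using Cons.prems(5) by force
  have st: "intercal (Suc (length (filter (\<lambda>x. x = None) (take i (osf ss D))))) (fillO w (osf ss D)) (ss ! i)
     = fillO w ((osf ss D)[i := Some (ss ! i)])"
  proof (rule fillO_step)
    show "length (osf ss D) = wrk w" using w by (simp add: osf_def)
    show "i < length (osf ss D)" using il by (simp add: osf_def)
    show "osf ss D ! i = None" using il iD by (simp add: osf_def)
    show "\<forall>s. Some s \<in> set (take i (osf ss D)) \<longrightarrow> wrk s = 0"
      using il c0 by (auto simp: osf_take split: if_splits)
  qed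
  have new: "weval g (Ins (pos i D) cur (es ! i)) = fillO w (osf ss (i # D))"
  proof -
    have p: "pos i D = Suc (length (filter (\<lambda>x. x = None) (take i (osf ss D))))"
      using pos_osf[of i ss D] il by simp
    show ?thesis using st Cons.prems(1) es il by (simp add: p osf_update)
  qed
  have "weval g (chain (Ins (pos i D) cur (es ! i)) es (i # D) is) = fillO w (osf ss (rev is @ i # D))"
  proof (rule Cons.IH[OF new])
    show "set is \<subseteq> {..<length ss}" "distinct is" "set is \<inter> set (i # D) = {}" using Cons.prems by auto
    show "\<forall>n<length is. \<forall>j. (j \<in> set (i # D) \<or> j \<in> set (take n is)) \<longrightarrow> j < is ! n \<longrightarrow> wrk (ss ! j) = 0"
    proof (intro allI impI)
      fix n j assume n: "n < length is" and h: "j \<in> set (i # D) \<or> j \<in> set (take n is)" and jl: "j < is ! n"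
      have "j \<in> set D \<or> j \<in> set (take (Suc n) (i # is))" using h by auto
      then show "wrk (ss ! j) = 0" using Cons.prems(5) n jl by (metis Suc_less_eq length_Cons nth_Cons_Suc)
    qed
  qed
  then show ?case by simp
qed

definition FF :: "nat list \<Rightarrow> nat set \<Rightarrow> nat" where
  "FF hs S = card ({..<length hs} - S) + (\<Sum>j\<in>S. hs ! j)"

lemma pos_le: assumes "i < L" "i \<notin> set D" shows "pos i D \<le> card ({..<L} - set D)"
proof -
  have "length (filter (\<lambda>j. j \<notin> set D) [0..<i]) = card {j. j < i \<and> j \<notin> set D}"
    by (simp add: length_filter_conv_card) (metis (no_types, lifting) add_0 nth_upt)
  moreover have "Suc (card {j. j < i \<and> j \<notin> set D}) = card (insert i {j. j < i \<and> j \<notin> set D})"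
    by simp
  moreover have "card (insert i {j. j < i \<and> j \<notin> set D}) \<le> card ({..<L} - set D)"
    by (rule card_mono) (use assms in auto)
  ultimately show ?thesis by (simp add: pos_def)
qed

lemma chain_rank:
  assumes es: "length es = length hs"
    "\<forall>j<length hs. wf_expr \<rho> (es ! j) \<and> rank \<rho> (es ! j) = hs ! j \<and> (\<forall>s\<in>subexprs (es ! j). rank \<rho> s \<le> k)"
  shows "wf_expr \<rho> cur \<Longrightarrow> rank \<rho> cur = FF hs (set D) \<Longrightarrow> (\<forall>s\<in>subexprs cur. rank \<rho> s \<le> k) \<Longrightarrow>
    set is \<subseteq> {..<length hs} \<Longrightarrow> distinct is \<Longrightarrow> set is \<inter> set D = {} \<Longrightarrow> set D \<subseteq> {..<length hs} \<Longrightarrow>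
    (\<forall>m\<le>length is. FF hs (set (take m is) \<union> set D) \<le> k) \<Longrightarrow>
    wf_expr \<rho> (chain cur es D is) \<and> rank \<rho> (chain cur es D is) = FF hs (set is \<union> set D) \<and>
    (\<forall>s\<in>subexprs (chain cur es D is). rank \<rho> s \<le> k)"
proof (induction "is" arbitrary: cur D)
  case Nil then show ?case by simp
next
  case (Cons i "is")
  have il: "i < length hs" and iD: "i \<notin> set D" using Cons.prems by auto
  have fin: "finite (set D)" by simp
  have iin: "i \<in> {..<length hs} - set D" using il iD by simp
  have cpos: "card ({..<length hs} - set D) \<ge> 1"
  proof -
    have "card ({..<length hs} - set D) > 0" using iin by (auto simp: card_gt_0_iff)
    then show ?thesis by simp
  qed
  have eqs: "{..<length hs} - insert i (set D) = ({..<length hs} - set D) - {i}" by auto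
  have cins: "card ({..<length hs} - insert i (set D)) = card ({..<length hs} - set D) - 1"
    unfolding eqs using iin by (simp add: card_Diff_singleton)
  have F: "FF hs (insert i (set D)) = FF hs (set D) + hs ! i - 1"
    using cpos cins iD by (simp add: FF_def sum.insert)
  define cur' where "cur' = Ins (pos i D) cur (es ! i)"
  have p1: "1 \<le> pos i D" by (simp add: pos_def)
  have p2: "pos i D \<le> rank \<rho> cur" using pos_le[OF il iD] Cons.prems(2) by (simp add: FF_def)
  have wf': "wf_expr \<rho> cur'" using p1 p2 Cons.prems(1) es il by (simp add: cur'_def)
  have rk': "rank \<rho> cur' = FF hs (set (i # D))" using F Cons.prems(2) es il by (simp add: cur'_def)
  have bnd: "FF hs (set (i # D)) \<le> k" using Cons.prems(8)[rule_format, of 1] by simp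
  have sub': "\<forall>s\<in>subexprs cur'. rank \<rho> s \<le> k" using rk' bnd Cons.prems(3) es il by (auto simp: cur'_def)
  have "wf_expr \<rho> (chain cur' es (i # D) is) \<and> rank \<rho> (chain cur' es (i # D) is) = FF hs (set is \<union> set (i # D)) \<and>
    (\<forall>s\<in>subexprs (chain cur' es (i # D) is). rank \<rho> s \<le> k)"
  proof (rule Cons.IH[OF wf' rk' sub'])
    show "set is \<subseteq> {..<length hs}" "distinct is" "set is \<inter> set (i # D) = {}" "set (i # D) \<subseteq> {..<length hs}"
      using Cons.prems by auto
    show "\<forall>m\<le>length is. FF hs (set (take m is) \<union> set (i # D)) \<le> k"
    proof (intro allI impI)
      fix m assume m: "m \<le> length is"
      have "FF hs (set (take (Suc m) (i # is)) \<union> set D) \<le> k" using Cons.prems(8)[rule_format, of "Suc m"] m by simp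
      then show "FF hs (set (take m is) \<union> set (i # D)) \<le> k" by (simp add: insert_commute)
    qed
  qed
  then show ?case by (simp add: cur'_def insert_commute)
qed

lemma ordr_set: "distinct (ordr hs)" "set (ordr hs) = {..<length hs}"
  by (auto simp: ordr_def)

lemma ordr_bound: "FF hs (set (take m (ordr hs))) \<le> max (length hs) (sum_list hs)"
proof -
  define Z where "Z = filter (\<lambda>i. hs ! i = 0) [0..<length hs]"
  define P where "P = filter (\<lambda>i. hs ! i \<noteq> 0) [0..<length hs]"
  define S where "S = set (take m (ordr hs))"
  define A where "A = {..<length hs}"
  have SA: "S \<subseteq> A" unfolding S_def A_def using ordr_set(2)[of hs] by (metis set_take_subset)
  show ?thesis
  proof (cases "m \<le> length Z")
    case True
    then have "S \<subseteq> set Z" by (simp add: S_def ordr_def Z_def[symmetric] P_def[symmetric] set_take_subset)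
    then have "(\<Sum>j\<in>S. hs ! j) = 0" by (intro sum.neutral) (auto simp: Z_def)
    moreover have "card (A - S) \<le> length hs" by (metis A_def card_lessThan card_mono Diff_subset finite_lessThan)
    ultimately show ?thesis by (simp add: FF_def A_def[symmetric] S_def[symmetric])
  next
    case False
    then have "set Z \<subseteq> S" by (simp add: S_def ordr_def Z_def[symmetric] P_def[symmetric])
    then have AS: "\<forall>j\<in>A - S. hs ! j \<noteq> 0" by (auto simp: Z_def A_def)
    have "card (A - S) = (\<Sum>j\<in>A - S. 1)" by simp
    also have "\<dots> \<le> (\<Sum>j\<in>A - S. hs ! j)" by (rule sum_mono) (use AS in force)
    finally have "FF hs S \<le> (\<Sum>j\<in>A - S. hs ! j) + (\<Sum>j\<in>S. hs ! j)" by (simp add: FF_def A_def[symmetric])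
    also have "\<dots> = (\<Sum>j\<in>A. hs ! j)"
      using SA by (metis A_def finite_lessThan sum.subset_diff)
    also have "\<dots> = sum_list hs" by (simp add: A_def sum_list_sum_nth atLeast0LessThan)
    finally show ?thesis by (simp add: S_def)
  qed
qed

lemma ordr_zero: assumes "n < length (ordr hs)" "j \<in> set (take n (ordr hs))" "j < ordr hs ! n"
  shows "hs ! j = 0"
proof (rule ccontr)
  assume nz: "hs ! j \<noteq> 0"
  define Z where "Z = filter (\<lambda>i. hs ! i = 0) [0..<length hs]"
  define P where "P = filter (\<lambda>i. hs ! i \<noteq> 0) [0..<length hs]"
  have L: "ordr hs = Z @ rev P" by (simp add: ordr_def Z_def P_def)
  have jZ: "j \<notin> set Z" using nz by (simp add: Z_def)
  have nZ: "\<not> n \<le> length Z"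
  proof
    assume "n \<le> length Z"
    then have "set (take n (ordr hs)) \<subseteq> set Z" by (simp add: L set_take_subset)
    then show False using assms(2) jZ by auto
  qed
  then have "j \<in> set (take (n - length Z) (rev P))" using assms(2) jZ by (simp add: L)
  then obtain a where a: "a < n - length Z" "a < length (rev P)" "rev P ! a = j"
    by (auto simp: in_set_conv_nth)
  have nl: "n - length Z < length (rev P)" using assms(1) nZ by (simp add: L)
  have ln: "ordr hs ! n = rev P ! (n - length Z)" using nZ by (simp add: L nth_append)
  have "sorted_wrt (<) P" unfolding P_def by (intro sorted_wrt_filter) (simp add: sorted_wrt_upt)
  then have "sorted_wrt (>) (rev P)" by (simp add: sorted_wrt_rev)
  then have "rev P ! a > rev P ! (n - length Z)" using a nl sorted_wrt_nth_less by fastforce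
  then show False using assms(3) a ln by simp
qed

lemma in_sum_list_mset: "c \<in> set cs \<Longrightarrow> x \<in># f c \<Longrightarrow> x \<in># sum_list (map f cs)"
  by (induction cs) auto

lemma FF_all: "FF hs {..<length hs} = sum_list hs"
  by (simp add: FF_def sum_list_sum_nth atLeast0LessThan)

lemma build_props:
  "good \<rho> n \<Longrightarrow> holes n \<le> k \<Longrightarrow> (\<forall>x\<in>#leafN n. \<rho> x \<le> k) \<Longrightarrow>
   wf_expr \<rho> (build n) \<and> rank \<rho> (build n) = holes n \<and> (\<forall>s\<in>subexprs (build n). rank \<rho> s \<le> k)"
proof (induction n)
  case (NNode x cs)
  define hs where "hs = map holes cs"
  define es where "es = map build cs"
  have L: "length cs = \<rho> x" using NNode.prems by simp
  have child: "\<forall>j<length hs. wf_expr \<rho> (es ! j) \<and> rank \<rho> (es ! j) = hs ! j \<and> (\<forall>s\<in>subexprs (es ! j). rank \<rho> s \<le> k)"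
  proof (intro allI impI)
    fix j assume j: "j < length hs"
    then have c: "cs ! j \<in> set cs" by (simp add: hs_def)
    have "holes (cs ! j) \<le> sum_list (map holes cs)" using c by (simp add: member_le_sum_list)
    then have "holes (cs ! j) \<le> k" using NNode.prems by simp
    moreover have "\<forall>y\<in>#leafN (cs ! j). \<rho> y \<le> k" using NNode.prems c in_sum_list_mset[of _ cs _ leafN] by auto
    moreover have "good \<rho> (cs ! j)" using NNode.prems c by simp
    ultimately show "wf_expr \<rho> (es ! j) \<and> rank \<rho> (es ! j) = hs ! j \<and> (\<forall>s\<in>subexprs (es ! j). rank \<rho> s \<le> k)"
      using NNode.IH[OF c] j by (simp add: es_def hs_def)
  qed
  have xk: "\<rho> x \<le> k" using NNode.prems by simp
  have "wf_expr \<rho> (chain (Leaf x) es [] (ordr hs)) \<and> rank \<rho> (chain (Leaf x) es [] (ordr hs)) = FF hs (set (ordr hs) \<union> set []) \<and>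
    (\<forall>s\<in>subexprs (chain (Leaf x) es [] (ordr hs)). rank \<rho> s \<le> k)"
  proof (rule chain_rank[OF _ child])
    show "length es = length hs" by (simp add: es_def hs_def)
    show "rank \<rho> (Leaf x) = FF hs (set [])" using L by (simp add: FF_def hs_def)
    show "\<forall>s\<in>subexprs (Leaf x). rank \<rho> s \<le> k" using xk by simp
    show "set (ordr hs) \<subseteq> {..<length hs}" "distinct (ordr hs)" using ordr_set by auto
    show "\<forall>m\<le>length (ordr hs). FF hs (set (take m (ordr hs)) \<union> set []) \<le> k"
      using ordr_bound[of hs] xk L NNode.prems(2) by (simp add: hs_def) (meson le_trans max.bounded_iff)
  qed auto
  moreover have "FF hs (set (ordr hs) \<union> set []) = holes (NNode x cs)"
    using ordr_set(2)[of hs] FF_all[of hs] by (simp add: hs_def)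
  ultimately show ?case by (simp add: es_def hs_def)
qed auto

lemma build_sem: assumes g: "\<forall>x. wrk (g x) = \<rho> x"
  shows "good \<rho> n \<Longrightarrow> weval g (build n) = sem g n"
proof (induction n)
  case (NNode x cs)
  define hs where "hs = map holes cs"
  define es where "es = map build cs"
  define ss where "ss = map (sem g) cs"
  have L: "length cs = \<rho> x" using NNode.prems by simp
  have ch: "\<forall>j<length ss. weval g (es ! j) = ss ! j" using NNode by (auto simp: es_def ss_def)
  have wk: "\<forall>j<length ss. wrk (ss ! j) = hs ! j" using NNode.prems wrk_sem[OF g] by (auto simp: ss_def hs_def)
  have "weval g (chain (Leaf x) es [] (ordr hs)) = fillO (g x) (osf ss (rev (ordr hs) @ []))"
  proof (rule chain_sem)
    show "length es = length ss" by (simp add: es_def ss_def)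
    show "\<forall>j<length ss. weval g (es ! j) = ss ! j" by (rule ch)
    show "length ss = wrk (g x)" using L g by (simp add: ss_def)
    have "osf ss [] = replicate (length ss) None" by (simp add: osf_def map_replicate_const)
    then show "weval g (Leaf x) = fillO (g x) (osf ss [])" by (simp add: fillO_none)
    show "set (ordr hs) \<subseteq> {..<length ss}" "distinct (ordr hs)" using ordr_set[of hs] by (auto simp: ss_def hs_def)
    show "set (ordr hs) \<inter> set [] = {}" by simp
    show "\<forall>n<length (ordr hs). \<forall>j. (j \<in> set [] \<or> j \<in> set (take n (ordr hs))) \<longrightarrow> j < ordr hs ! n \<longrightarrow> wrk (ss ! j) = 0"
    proof (intro allI impI)
      fix n j assume n: "n < length (ordr hs)" and h: "j \<in> set [] \<or> j \<in> set (take n (ordr hs))" and jl: "j < ordr hs ! n"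
      have jin: "j \<in> set (take n (ordr hs))" using h by simp
      then have "j < length ss" using ordr_set(2)[of hs] set_take_subset[of n "ordr hs"] by (auto simp: ss_def hs_def)
      then show "wrk (ss ! j) = 0" using wk ordr_zero[OF n jin jl] by simp
    qed
  qed
  moreover have "osf ss (rev (ordr hs) @ []) = map Some ss"
    using ordr_set(2)[of hs] by (intro nth_equalityI) (auto simp: osf_def ss_def hs_def)
  ultimately show ?case by (simp only: build.simps sem_Node es_def[symmetric] hs_def[symmetric] ss_def[symmetric])
qed auto

lemma chain_leaves: "mset (leafl (chain cur es D is)) = mset (leafl cur) + sum_list (map (\<lambda>i. mset (leafl (es ! i))) is)"
  by (induction "is" arbitrary: cur D) auto

lemma build_leaves: "mset (leafl (build n)) = leafN n"
proof (induction n)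
  case (NNode x cs)
  define f where "f = (\<lambda>i. mset (leafl (map build cs ! i)))"
  have "sum_list (map f (ordr (map holes cs))) = sum f (set (ordr (map holes cs)))"
    using ordr_set(1) by (simp add: sum_list_distinct_conv_sum_set)
  also have "\<dots> = (\<Sum>i<length cs. f i)" using ordr_set(2) by simp
  also have "\<dots> = sum_list (map leafN cs)"
    using NNode by (simp add: sum_list_sum_nth atLeast0LessThan f_def)
  finally show ?case by (simp add: chain_leaves f_def)
qed auto

lemma leaves_leafl: "leaves e = set (leafl e)"
  by (induction e) auto

lemma weval_cong: "(\<forall>x\<in>leaves e. g x = h x) \<Longrightarrow> weval g e = weval h e"
  by (induction e) auto

lemma bin_sem:
  assumes A: "A = {weval g a | g. \<forall>x\<in>leaves a. g x \<in> \<mu> x}"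
    and B: "B = {weval g b | g. \<forall>x\<in>leaves b. g x \<in> \<mu> x}"
    and dj: "leaves a \<inter> leaves b = {}"
    and c: "\<And>g. weval g c = F (weval g a) (weval g b)" and lc: "leaves c = leaves a \<union> leaves b"
  shows "{F u v | u v. u \<in> A \<and> v \<in> B} = {weval g c | g. \<forall>x\<in>leaves c. g x \<in> \<mu> x}"
proof
  show "{F u v | u v. u \<in> A \<and> v \<in> B} \<subseteq> {weval g c | g. \<forall>x\<in>leaves c. g x \<in> \<mu> x}"
  proof
    fix z assume "z \<in> {F u v | u v. u \<in> A \<and> v \<in> B}"
    then obtain g1 g2 where z: "z = F (weval g1 a) (weval g2 b)" and h1: "\<forall>x\<in>leaves a. g1 x \<in> \<mu> x"
      and h2: "\<forall>x\<in>leaves b. g2 x \<in> \<mu> x" using A B by blast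
    define g where "g = (\<lambda>x. if x \<in> leaves a then g1 x else g2 x)"
    have "weval g a = weval g1 a" by (rule weval_cong) (simp add: g_def)
    moreover have "weval g b = weval g2 b" by (rule weval_cong) (use dj in \<open>auto simp: g_def\<close>)
    moreover have "\<forall>x\<in>leaves c. g x \<in> \<mu> x" using h1 h2 lc by (auto simp: g_def)
    ultimately show "z \<in> {weval g c | g. \<forall>x\<in>leaves c. g x \<in> \<mu> x}" using z c by force
  qed
next
  show "{weval g c | g. \<forall>x\<in>leaves c. g x \<in> \<mu> x} \<subseteq> {F u v | u v. u \<in> A \<and> v \<in> B}"
    using A B c lc by blast
qed

lemma val_lin: "distinct (leafl e) \<Longrightarrow> val \<mu> e = {weval g e | g. \<forall>x\<in>leaves e. g x \<in> \<mu> x}"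
proof (induction e)
  case (Leaf x)
  show ?case
  proof
    show "val \<mu> (Leaf x) \<subseteq> {weval g (Leaf x) | g. \<forall>x\<in>leaves (Leaf x). g x \<in> \<mu> x}"
    proof
      fix y assume "y \<in> val \<mu> (Leaf x)"
      then show "y \<in> {weval g (Leaf x) | g. \<forall>x\<in>leaves (Leaf x). g x \<in> \<mu> x}"
        by (intro CollectI exI[of _ "\<lambda>_. y"]) simp
    qed
  qed auto
next
  case (Cat a b)
  then show ?case unfolding val.simps set_concat_def
    by (intro bin_sem) (auto simp: leaves_leafl)
next
  case (Ins j a b)
  then show ?case unfolding val.simps set_intercal_def
    by (intro bin_sem) (auto simp: leaves_leafl)
qed auto

lemma subst_props:
  "rank \<rho> (subst \<sigma> D) = rank (\<lambda>i. \<rho> (\<sigma> i)) D"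
  "wf_expr \<rho> (subst \<sigma> D) = wf_expr (\<lambda>i. \<rho> (\<sigma> i)) D"
  "subexprs (subst \<sigma> D) = subst \<sigma> ` subexprs D"
  by (induction D) auto

lemma num_leafl: "leafl (num n e) = [n..<n + length (leafl e)]"
proof (induction e arbitrary: n)
  case (Cat a b) then show ?case
    using upt_add_eq_append[of n "n + length (leafl a)" "length (leafl b)"] by (simp add: add.assoc)
next
  case (Ins j a b) then show ?case
    using upt_add_eq_append[of n "n + length (leafl a)" "length (leafl b)"] by (simp add: add.assoc)
qed auto

lemma num_subst: "(\<forall>i<length (leafl e). \<sigma> (n + i) = leafl e ! i) \<Longrightarrow> subst \<sigma> (num n e) = e"
proof (induction e arbitrary: n)
  case (Cat a b)
  have "subst \<sigma> (num n a) = a" using Cat.prems by (intro Cat.IH(1)) (auto simp: nth_append)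
  moreover have "subst \<sigma> (num (n + length (leafl a)) b) = b"
    using Cat.prems by (intro Cat.IH(2)) (auto simp: nth_append add.assoc dest: spec[of _ "length (leafl a) + _"])
  ultimately show ?case by simp
next
  case (Ins j a b)
  have "subst \<sigma> (num n a) = a" using Ins.prems by (intro Ins.IH(1)) (auto simp: nth_append)
  moreover have "subst \<sigma> (num (n + length (leafl a)) b) = b"
    using Ins.prems by (intro Ins.IH(2)) (auto simp: nth_append add.assoc dest: spec[of _ "length (leafl a) + _"])
  ultimately show ?case by simp
qed auto

lemma wrk_repl: "wrk (replicate n None) = n"
  by (induction n) auto

theorem corollary1:
  fixes k :: nat and \<rho> :: "'n \<Rightarrow> nat" and \<alpha> :: "('a::finite, 'n) expr"
  assumes "wf_expr \<rho> \<alpha>" and "k_essential k \<rho> \<alpha>"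
  shows "\<exists>\<alpha>'. wf_expr \<rho> \<alpha>' \<and> k_correct k \<rho> \<alpha>' \<and> term_equiv \<rho> \<alpha> \<alpha>'"
proof -
  define As where "As = leafl \<alpha>"
  define \<sigma> where "\<sigma> = (\<lambda>i. As ! i)"
  define \<rho>V where "\<rho>V = (\<lambda>i. \<rho> (As ! i))"
  define D1 :: "('a, nat) expr" where "D1 = num 0 \<alpha>"
  define D2 where "D2 = build (tr \<rho>V D1)"
  have s1: "subst \<sigma> D1 = \<alpha>" unfolding D1_def \<sigma>_def As_def by (rule num_subst) simp
  have wf1: "wf_expr \<rho>V D1" using assms(1) subst_props(2)[of \<rho> \<sigma> D1] s1 by (simp add: \<rho>V_def \<sigma>_def)
  have rk1: "rank \<rho>V D1 = rank \<rho> \<alpha>" using subst_props(1)[of \<rho> \<sigma> D1] s1 by (simp add: \<rho>V_def \<sigma>_def)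
  have ll1: "leafl D1 = [0..<length As]" by (simp add: D1_def num_leafl As_def)
  have lv1: "leaves D1 = {..<length As}" by (simp add: leaves_leafl ll1 atLeast0LessThan)
  have dist1: "distinct (leafl D1)" by (simp add: ll1)
  note T = tr_props[OF wf1]
  have bnd: "\<forall>x\<in>#leafN (tr \<rho>V D1). \<rho>V x \<le> k"
  proof
    fix x assume "x \<in># leafN (tr \<rho>V D1)"
    then have "x < length As" using T by (simp add: ll1)
    then have "As ! x \<in> leaves \<alpha>" by (simp add: As_def leaves_leafl)
    then show "\<rho>V x \<le> k" using assms(2) by (auto simp: k_essential_def \<rho>V_def)
  qed
  have hk: "holes (tr \<rho>V D1) \<le> k" using T rk1 assms(2) by (simp add: k_essential_def)
  note B = build_props[OF conjunct1[OF T] hk bnd]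
  have ml: "mset (leafl D2) = mset (leafl D1)" using build_leaves[of "tr \<rho>V D1"] T by (simp add: D2_def)
  have lv2: "leaves D2 = leaves D1" by (metis leaves_leafl ml set_mset_mset)
  have dist2: "distinct (leafl D2)" using ml dist1 mset_eq_imp_distinct_iff by blast
  have eqw: "weval g D1 = weval g D2" if g: "\<forall>x. wrk (g x) = \<rho>V x" for g
    using tr_sem[OF g wf1] build_sem[OF g conjunct1[OF T]] by (simp add: D2_def)
  have meq: "mc_equiv \<rho>V D1 D2"
    unfolding mc_equiv_def
  proof (intro allI impI)
    fix \<mu> :: "nat \<Rightarrow> 'a option list set" assume mu: "\<forall>x. \<forall>w\<in>\<mu> x. wrk w = \<rho>V x"
    have "{weval g D1 | g. \<forall>x\<in>leaves D1. g x \<in> \<mu> x} = {weval g D2 | g. \<forall>x\<in>leaves D2. g x \<in> \<mu> x}"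
    proof -
      have "weval g D1 = weval g D2" if h: "\<forall>x\<in>leaves D1. g x \<in> \<mu> x" for g
      proof -
        define g' where "g' = (\<lambda>x. if x \<in> leaves D1 then g x else replicate (\<rho>V x) None)"
        have "\<forall>x. wrk (g' x) = \<rho>V x" using mu h by (auto simp: g'_def wrk_repl)
        then have "weval g' D1 = weval g' D2" by (rule eqw)
        moreover have "weval g' D1 = weval g D1" by (rule weval_cong) (simp add: g'_def)
        moreover have "weval g' D2 = weval g D2" by (rule weval_cong) (simp add: g'_def lv2)
        ultimately show ?thesis by simp
      qed
      then show ?thesis using lv2 by metis
    qed
    then show "val \<mu> D1 = val \<mu> D2" using val_lin[OF dist1] val_lin[OF dist2] by simp
  qed
  have wf2: "wf_expr \<rho>V D2" using B by (simp add: D2_def)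
  show ?thesis
  proof (intro exI conjI)
    show "wf_expr \<rho> (subst \<sigma> D2)" using wf2 subst_props(2)[of \<rho> \<sigma> D2] by (simp add: \<rho>V_def \<sigma>_def)
    show "k_correct k \<rho> (subst \<sigma> D2)"
      unfolding k_correct_def subst_props(3)
    proof
      fix t assume "t \<in> subst \<sigma> ` subexprs D2"
      then obtain s where s: "s \<in> subexprs D2" "t = subst \<sigma> s" by blast
      have "rank \<rho>V s \<le> k" using B s(1) by (simp add: D2_def)
      then show "rank \<rho> t \<le> k" using s(2) subst_props(1)[of \<rho> \<sigma> s] by (simp add: \<rho>V_def \<sigma>_def)
    qed
    show "term_equiv \<rho> \<alpha> (subst \<sigma> D2)"
      unfolding term_equiv_def
      by (rule exI[of _ As], rule exI[of _ D1], rule exI[of _ D2])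
         (use lv1 lv2 wf1 wf2 meq s1 in \<open>simp add: \<rho>V_def \<sigma>_def\<close>)
  qed
qed

end
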